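(* Let $l^1,\dots,l^T\in[0,1]^N$ be an arbitrary (adversarial) sequence of loss vectors, let $w^1\in\Delta^N$ have all entries positive, let $0<\eta<1$, and define $$w^{t+1}=w^t\odot\big(\mathbb{1}-\eta\,\Pi_{w^t} l^t\big),\qquad (\Pi_{w^t}l^t)_i=l^t_i-w^t\cdot l^t.$$ Then for every $u\in\Delta^N$, $$\sum_{t=1}^T w^t\cdot l^t-\sum_{t=1}^T u\cdot l^t\le \frac{D(u\,|\,w^1)}{\eta}+\frac{T\eta}{2(1-\eta)}.$$ In particular, taking $w^1=(1/N,\ldots,1/N)$ and $\eta=\frac{\sqrt{2\log N}}{\sqrt{2\log N}+\sqrt{T}}$ gives, for every $u\in\Delta^N$, $$\sum_{t=1}^T w^t\cdot l^t-\sum_{t=1}^T u\cdot l^t\le\sqrt{2T\log N}+\log N,$$ and this holds in particular for $u=e_j$, where $j$ is the best expert (minimizing $\sum_t l^t_j$) and $e_j$ is the standard basis vector.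
   Context: $\Delta^N=\{w\in\mathbb{R}^N : \sum_i w_i=1,\ w_i\ge 0\}$; $\odot$ is componentwise multiplication and $\mathbb{1}$ the all-ones vector. The relative entropy is $D(u\,|\,w)=\sum_{i:\,u_i\ne0}u_i\log(u_i/w_i)$. *)

theory Defs
  imports Complex_Main
begin

text \<open>Vectors in R^N are modelled as functions nat => real; only indices i < N matter.\<close>

definition simplex :: "nat \<Rightarrow> (nat \<Rightarrow> real) set" where
  "simplex N = {w. (\<forall>i<N. 0 \<le> w i) \<and> (\<Sum>i<N. w i) = 1}"

definition dotN :: "nat \<Rightarrow> (nat \<Rightarrow> real) \<Rightarrow> (nat \<Rightarrow> real) \<Rightarrow> real" where
  "dotN N a b = (\<Sum>i<N. a i * b i)"

definition relent :: "nat \<Rightarrow> (nat \<Rightarrow> real) \<Rightarrow> (nat \<Rightarrow> real) \<Rightarrow> real" where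
  "relent N u w = (\<Sum>i\<in>{i. i < N \<and> u i \<noteq> 0}. u i * ln (u i / w i))"

text \<open>Weights: mw N eta l w1 t is w^(t+1) of the paper (time shifted to start at 0);
  l t is the loss vector l^(t+1).\<close>
fun mw :: "nat \<Rightarrow> real \<Rightarrow> (nat \<Rightarrow> nat \<Rightarrow> real) \<Rightarrow> (nat \<Rightarrow> real) \<Rightarrow> nat \<Rightarrow> nat \<Rightarrow> real" where
  "mw N eta l w1 0 = w1"
| "mw N eta l w1 (Suc t) =
     (\<lambda>i. mw N eta l w1 t i * (1 - eta * (l t i - dotN N (mw N eta l w1 t) (l t))))"

end

theory Submission
  imports Defs
begin


lemma ln_lower:
  fixes eta y :: real
  assumes e: "0 < eta" "eta < 1" and y: "\<bar>y\<bar> \<le> eta"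
  shows "- ln (1 - y) \<le> y + y^2 / (2 * (1 - eta))"
proof -
  define f where "f = (\<lambda>z::real. ln (1 - z) + z + z^2 / (2 * (1 - eta)))"
  have d: "DERIV f z :> (- 1 / (1 - z) + 1 + z / (1 - eta))" if "\<bar>z\<bar> \<le> eta" for z
  proof -
    have z1: "1 - z \<noteq> 0" using that e by linarith
    have e1: "1 - eta \<noteq> 0" using e by simp
    have zl: "z < 1" using that e by linarith
    have "DERIV f z :> (1 / (1 - z) * (0 - 1) + 1 + (2 * z) / (2 * (1 - eta)))"
      unfolding f_def using zl e1
      by (auto intro!: derivative_eq_intros simp: power2_eq_square)
    moreover have "1 / (1 - z) * (0 - 1) + 1 + (2 * z) / (2 * (1 - eta)) = - 1 / (1 - z) + 1 + z / (1 - eta)"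
      using e1 by (auto simp: divide_simps algebra_simps)
    ultimately show ?thesis by simp
  qed
  have dv: "- 1 / (1 - z) + 1 + z / (1 - eta) = z * (1 / (1 - eta) - 1 / (1 - z))"
    if "\<bar>z\<bar> \<le> eta" for z
  proof -
    have "1 - z > 0" using that e by linarith
    then show ?thesis using e by (simp add: field_simps)
  qed
  have f0: "f 0 = 0" unfolding f_def by simp
  have "f 0 \<le> f y"
  proof (cases "y \<ge> 0")
    case True
    show ?thesis
    proof (rule DERIV_nonneg_imp_nondecreasing[OF True])
      fix x assume x: "0 \<le> x" "x \<le> y"
      then have ax: "\<bar>x\<bar> \<le> eta" using y by linarith
      have "1 / (1 - eta) - 1 / (1 - x) \<ge> 0"
        using ax e x by (intro diff_ge_0_iff_ge[THEN iffD2] divide_left_mono) auto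
      then have "x * (1 / (1 - eta) - 1 / (1 - x)) \<ge> 0" using x by simp
      then show "\<exists>d. DERIV f x :> d \<and> d \<ge> 0" using d[OF ax] dv[OF ax] by auto
    qed
  next
    case False
    show ?thesis
    proof (rule DERIV_nonpos_imp_nonincreasing[of y 0 f])
      show "y \<le> 0" using False by simp
      fix x assume x: "y \<le> x" "x \<le> 0"
      then have ax: "\<bar>x\<bar> \<le> eta" using y by linarith
      have "1 / (1 - x) \<le> 1" using x by (simp add: divide_le_eq)
      moreover have "1 \<le> 1 / (1 - eta)" using e by (simp add: le_divide_eq)
      ultimately have "1 / (1 - eta) - 1 / (1 - x) \<ge> 0" by linarith
      then have "x * (1 / (1 - eta) - 1 / (1 - x)) \<le> 0" using x
        by (simp add: mult_nonpos_nonneg)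
      then show "\<exists>d. DERIV f x :> d \<and> d \<le> 0" using d[OF ax] dv[OF ax] by auto
    qed
  qed
  then show ?thesis using f0 unfolding f_def by simp
qed


lemma dot_bounds:
  assumes w: "w \<in> simplex N" and v: "\<And>i. i < N \<Longrightarrow> 0 \<le> v i \<and> v i \<le> 1"
  shows "0 \<le> dotN N w v \<and> dotN N w v \<le> 1"
proof -
  have w0: "\<And>i. i < N \<Longrightarrow> 0 \<le> w i" and ws: "(\<Sum>i<N. w i) = 1"
    using w unfolding simplex_def by auto
  have "0 \<le> dotN N w v" unfolding dotN_def
    by (rule sum_nonneg) (use w0 v in auto)
  moreover have "dotN N w v \<le> (\<Sum>i<N. w i)" unfolding dotN_def
    by (rule sum_mono) (use w0 v in \<open>auto intro: mult_left_le\<close>)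
  ultimately show ?thesis using ws by simp
qed

lemma relent_full:
  "relent N u w = (\<Sum>i<N. u i * ln (u i / w i))"
  unfolding relent_def
  by (rule sum.mono_neutral_left) auto

lemma relent_nonneg:
  assumes u: "u \<in> simplex N" and w: "w \<in> simplex N" and wp: "\<forall>i<N. 0 < w i"
  shows "0 \<le> relent N u w"
proof -
  have u0: "\<And>i. i < N \<Longrightarrow> 0 \<le> u i" and us: "(\<Sum>i<N. u i) = 1"
    using u unfolding simplex_def by auto
  have ws: "(\<Sum>i<N. w i) = 1" using w unfolding simplex_def by auto
  have "u i - w i \<le> u i * ln (u i / w i)" if i: "i < N" for i
  proof (cases "u i = 0")
    case True then show ?thesis using wp i by (simp add: order_less_imp_le)
  next
    case False
    then have up: "u i > 0" using u0 i by fastforce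
    have wpi: "w i > 0" using wp i by simp
    have "ln (w i / u i) \<le> w i / u i - 1" using up wpi by (intro ln_le_minus_one) simp
    moreover have "ln (u i / w i) = - ln (w i / u i)" using up wpi by (simp add: ln_div)
    ultimately have "1 - w i / u i \<le> ln (u i / w i)" by linarith
    then have "u i * (1 - w i / u i) \<le> u i * ln (u i / w i)" using up by simp
    then show ?thesis using up by (simp add: algebra_simps)
  qed
  then have "(\<Sum>i<N. u i - w i) \<le> (\<Sum>i<N. u i * ln (u i / w i))" by (intro sum_mono) auto
  then show ?thesis using us ws by (simp add: relent_full sum_subtractf)
qed

lemma mw_inv:
  assumes loss: "\<And>t i. t < T \<Longrightarrow> i < N \<Longrightarrow> 0 \<le> l t i \<and> l t i \<le> 1"
    and w1: "w1 \<in> simplex N" "\<forall>i<N. 0 < w1 i" and e: "0 < eta" "eta < 1"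
  shows "t \<le> T \<Longrightarrow> mw N eta l w1 t \<in> simplex N \<and> (\<forall>i<N. 0 < mw N eta l w1 t i)"
proof (induction t)
  case 0 then show ?case using w1 by simp
next
  case (Suc t)
  define w where "w = mw N eta l w1 t"
  define d where "d = dotN N w (l t)"
  have tT: "t < T" using Suc by simp
  have ws: "w \<in> simplex N" and wp: "\<forall>i<N. 0 < w i" using Suc unfolding w_def by auto
  have d: "0 \<le> d \<and> d \<le> 1" unfolding d_def using dot_bounds[OF ws, of "l t"] loss[OF tT] by auto
  have fac: "0 < 1 - eta * (l t i - d)" if i: "i < N" for i
  proof -
    have "l t i - d \<le> 1" using loss[OF tT i] d by linarith
    then have "eta * (l t i - d) \<le> eta" using e mult_left_mono[of "l t i - d" 1 eta] by simp
    then show ?thesis using e by linarith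
  qed
  have eq: "mw N eta l w1 (Suc t) = (\<lambda>i. w i * (1 - eta * (l t i - d)))"
    by (simp add: w_def d_def)
  have sumw: "(\<Sum>i<N. w i) = 1" using ws unfolding simplex_def by auto
  have "(\<Sum>i<N. w i * (1 - eta * (l t i - d)))
      = (\<Sum>i<N. w i) - eta * (\<Sum>i<N. w i * l t i) + eta * d * (\<Sum>i<N. w i)"
    by (simp add: algebra_simps sum_subtractf sum.distrib sum_distrib_left)
  also have "\<dots> = 1" using sumw by (simp add: d_def dotN_def)
  finally have s1: "(\<Sum>i<N. w i * (1 - eta * (l t i - d))) = 1" .
  have pos: "\<forall>i<N. 0 < w i * (1 - eta * (l t i - d))" using wp fac by simp
  show ?case unfolding eq simplex_def using s1 pos by (auto intro: less_imp_le)
qed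

lemma step_bound:
  assumes loss: "\<And>t i. t < T \<Longrightarrow> i < N \<Longrightarrow> 0 \<le> l t i \<and> l t i \<le> 1"
    and w1: "w1 \<in> simplex N" "\<forall>i<N. 0 < w1 i" and e: "0 < eta" "eta < 1"
    and u: "u \<in> simplex N" and tT: "t < T"
  shows "relent N u (mw N eta l w1 (Suc t)) - relent N u (mw N eta l w1 t)
     \<le> eta * (dotN N u (l t) - dotN N (mw N eta l w1 t) (l t)) + eta^2 / (2 * (1 - eta))"
proof -
  define w where "w = mw N eta l w1 t"
  define d where "d = dotN N w (l t)"
  define c where "c = eta^2 / (2 * (1 - eta))"
  have ws: "w \<in> simplex N" and wp: "\<forall>i<N. 0 < w i" using mw_inv[OF loss w1 e, of t] tT
    unfolding w_def by auto
  have d: "0 \<le> d \<and> d \<le> 1" unfolding d_def using dot_bounds[OF ws, of "l t"] loss[OF tT] by auto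
  have u0: "\<And>i. i < N \<Longrightarrow> 0 \<le> u i" and us: "(\<Sum>i<N. u i) = 1"
    using u unfolding simplex_def by auto
  have eq: "mw N eta l w1 (Suc t) = (\<lambda>i. w i * (1 - eta * (l t i - d)))"
    by (simp add: w_def d_def)
  have trm: "u i * ln (u i / (w i * (1 - eta * (l t i - d)))) - u i * ln (u i / w i)
      \<le> u i * (eta * (l t i - d) + c)" if i: "i < N" for i
  proof -
    have x: "\<bar>eta * (l t i - d)\<bar> \<le> eta"
    proof -
      have "\<bar>l t i - d\<bar> \<le> 1" using loss[OF tT i] d by linarith
      then show ?thesis using e by (simp add: abs_mult mult_left_le)
    qed
    have fac: "0 < 1 - eta * (l t i - d)" using x e by linarith
    have lb: "- ln (1 - eta * (l t i - d)) \<le> eta * (l t i - d) + c"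
    proof -
      have "(eta * (l t i - d))^2 \<le> eta^2"
        using x by (metis abs_le_square_iff abs_of_pos e(1))
      then have "(eta * (l t i - d))^2 / (2 * (1 - eta)) \<le> c"
        unfolding c_def using e by (intro divide_right_mono) auto
      then show ?thesis using ln_lower[OF e x] by linarith
    qed
    show ?thesis
    proof (cases "u i = 0")
      case True then show ?thesis by simp
    next
      case False
      then have up: "u i > 0" using u0 i by fastforce
      have wpi: "w i > 0" using wp i by simp
      have "ln (u i / (w i * (1 - eta * (l t i - d)))) = ln (u i / w i) - ln (1 - eta * (l t i - d))"
        using up wpi fac by (simp add: ln_div ln_mult)
      then have L: "ln (u i / (w i * (1 - eta * (l t i - d)))) - ln (u i / w i)
          = - ln (1 - eta * (l t i - d))" by linarith
      have "u i * ln (u i / (w i * (1 - eta * (l t i - d)))) - u i * ln (u i / w i)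
          = u i * (ln (u i / (w i * (1 - eta * (l t i - d)))) - ln (u i / w i))"
        by (simp only: right_diff_distrib)
      also have "\<dots> = u i * (- ln (1 - eta * (l t i - d)))" by (simp only: L)
      also have "\<dots> \<le> u i * (eta * (l t i - d) + c)" using lb up by (intro mult_left_mono) auto
      finally show ?thesis .
    qed
  qed
  have "relent N u (mw N eta l w1 (Suc t)) - relent N u w
      = (\<Sum>i<N. u i * ln (u i / (w i * (1 - eta * (l t i - d)))) - u i * ln (u i / w i))"
    unfolding eq relent_full by (simp add: sum_subtractf)
  also have "\<dots> \<le> (\<Sum>i<N. u i * (eta * (l t i - d) + c))" by (intro sum_mono trm) auto
  also have "\<dots> = eta * (\<Sum>i<N. u i * l t i) - eta * d * (\<Sum>i<N. u i) + c * (\<Sum>i<N. u i)"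
    by (simp add: algebra_simps sum_subtractf sum.distrib sum_distrib_left)
  also have "\<dots> = eta * (dotN N u (l t) - d) + c" using us by (simp add: dotN_def algebra_simps)
  finally show ?thesis unfolding w_def d_def c_def .
qed

lemma regret:
  assumes loss: "\<And>t i. t < T \<Longrightarrow> i < N \<Longrightarrow> 0 \<le> l t i \<and> l t i \<le> 1"
    and w1: "w1 \<in> simplex N" "\<forall>i<N. 0 < w1 i" and e: "0 < eta" "eta < 1"
    and u: "u \<in> simplex N"
  shows "(\<Sum>t<T. dotN N (mw N eta l w1 t) (l t)) - (\<Sum>t<T. dotN N u (l t))
          \<le> relent N u w1 / eta + real T * eta / (2 * (1 - eta))"
proof -
  define P where "P = (\<lambda>t. relent N u (mw N eta l w1 t))"
  define c where "c = eta^2 / (2 * (1 - eta))"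
  have "(\<Sum>t<T. P (Suc t) - P t) \<le> (\<Sum>t<T. eta * (dotN N u (l t) - dotN N (mw N eta l w1 t) (l t)) + c)"
    unfolding P_def c_def by (intro sum_mono step_bound[OF loss w1 e u]) auto
  also have "\<dots> = eta * ((\<Sum>t<T. dotN N u (l t)) - (\<Sum>t<T. dotN N (mw N eta l w1 t) (l t))) + real T * c"
    by (simp add: sum.distrib sum_subtractf sum_distrib_left right_diff_distrib)
  finally have A: "P T - P 0 \<le> eta * ((\<Sum>t<T. dotN N u (l t)) - (\<Sum>t<T. dotN N (mw N eta l w1 t) (l t))) + real T * c"
    by (simp add: sum_lessThan_telescope)
  have "0 \<le> P T" unfolding P_def using mw_inv[OF loss w1 e, of T] relent_nonneg[OF u] by auto
  moreover have "P 0 = relent N u w1" by (simp add: P_def)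
  ultimately have B: "eta * ((\<Sum>t<T. dotN N (mw N eta l w1 t) (l t)) - (\<Sum>t<T. dotN N u (l t)))
      \<le> relent N u w1 + real T * c" using A by (simp add: algebra_simps)
  have "real T * c = eta * (real T * eta / (2 * (1 - eta)))" unfolding c_def
    by (simp add: power2_eq_square)
  then have "eta * ((\<Sum>t<T. dotN N (mw N eta l w1 t) (l t)) - (\<Sum>t<T. dotN N u (l t)))
      \<le> eta * (relent N u w1 / eta + real T * eta / (2 * (1 - eta)))"
    using B e by (simp add: distrib_left)
  then show ?thesis using e by simp
qed


lemma relent_unif:
  assumes u: "u \<in> simplex N" and N: "N \<ge> 1"
  shows "relent N u (\<lambda>i. 1 / real N) \<le> ln (real N)"
proof -
  have u0: "\<And>i. i < N \<Longrightarrow> 0 \<le> u i" and us: "(\<Sum>i<N. u i) = 1"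
    using u unfolding simplex_def by auto
  have "u i * ln (u i / (1 / real N)) \<le> u i * ln (real N)" if i: "i < N" for i
  proof (cases "u i = 0")
    case True then show ?thesis by simp
  next
    case False
    then have up: "u i > 0" using u0 i by fastforce
    have "u i \<le> (\<Sum>i<N. u i)" using i u0 by (intro member_le_sum) auto
    then have u1: "u i \<le> 1" using us by simp
    have "u i / (1 / real N) = u i * real N" by simp
    also have "\<dots> \<le> real N" using u1 N by (simp add: mult_left_le_one_le)
    finally have "ln (u i / (1 / real N)) \<le> ln (real N)" using up N by simp
    then show ?thesis using up by (simp add: mult_left_mono)
  qed
  then have "relent N u (\<lambda>i. 1 / real N) \<le> (\<Sum>i<N. u i * ln (real N))"
    unfolding relent_full by (intro sum_mono) auto
  also have "\<dots> = ln (real N)" using us by (simp add: sum_distrib_right[symmetric])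
  finally show ?thesis .
qed

lemma mw_zero: "mw N 0 l w1 t = w1"
  by (induction t) auto

lemma part2:
  assumes loss: "\<And>t i. t < T \<Longrightarrow> i < N \<Longrightarrow> 0 \<le> l t i \<and> l t i \<le> 1"
    and u: "u \<in> simplex N"
    and eta: "eta = sqrt (2 * ln (real N)) / (sqrt (2 * ln (real N)) + sqrt (real T))"
  shows "(\<Sum>t<T. dotN N (mw N eta l (\<lambda>i. 1 / real N) t) (l t)) - (\<Sum>t<T. dotN N u (l t))
               \<le> sqrt (2 * real T * ln (real N)) + ln (real N)"
proof -
  have N1: "N \<ge> 1" using u unfolding simplex_def by (cases N) auto
  have lnN: "0 \<le> ln (real N)" using N1 by simp
  have rhs: "0 \<le> sqrt (2 * real T * ln (real N)) + ln (real N)" using lnN by simp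
  show ?thesis
  proof (cases "N = 1")
    case True
    then have e0: "eta = 0" using eta by simp
    have u1: "u 0 = 1" using u True unfolding simplex_def by simp
    show ?thesis using True rhs unfolding e0 mw_zero by (simp add: dotN_def u1)
  next
    case False
    then have N2: "N \<ge> 2" using N1 by simp
    show ?thesis
    proof (cases "T = 0")
      case True then show ?thesis using rhs by simp
    next
      case False
      define a where "a = sqrt (2 * ln (real N))"
      define b where "b = sqrt (real T)"
      have lnp: "0 < ln (real N)" using N2 by simp
      have a: "a > 0" unfolding a_def using lnp by simp
      have b: "b > 0" unfolding b_def using False by simp
      have a2: "a^2 = 2 * ln (real N)" unfolding a_def using lnp by simp
      have b2: "b^2 = real T" unfolding b_def by simp
      have ab: "sqrt (2 * real T * ln (real N)) = a * b"
        unfolding a_def b_def by (simp add: real_sqrt_mult[symmetric] algebra_simps)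
      have e: "eta = a / (a + b)" using eta a_def b_def by simp
      have e0: "0 < eta" "eta < 1" unfolding e using a b by (auto simp: divide_simps)
      have w1: "(\<lambda>i. 1 / real N) \<in> simplex N" "\<forall>i<N. 0 < 1 / real N"
        unfolding simplex_def using N1 by auto
      have R: "relent N u (\<lambda>i. 1 / real N) / eta \<le> ln (real N) / eta"
        using relent_unif[OF u N1] e0 by (simp add: divide_right_mono)
      have "ln (real N) / eta + real T * eta / (2 * (1 - eta))
          = ln (real N) + a * b"
      proof -
        have "ln (real N) / eta = a^2 / 2 * (a + b) / a" unfolding e using a2 a b by simp
        also have "\<dots> = a * (a + b) / 2" using a by (simp add: power2_eq_square)
        finally have X: "ln (real N) / eta = a * (a + b) / 2" .
        have "1 - eta = b / (a + b)" unfolding e using a b by (simp add: field_simps)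
        then have "real T * eta / (2 * (1 - eta)) = b^2 * (a / (a + b)) / (2 * (b / (a + b)))"
          unfolding e b2 by simp
        also have "\<dots> = a * b / 2"
        proof -
          have nz: "a + b \<noteq> 0" "b \<noteq> 0" "a * (b * 2) + b * (b * 2) \<noteq> 0"
          proof -
            have p: "0 < a * (b * 2)" "0 < b * (b * 2)" using a b by simp_all
            then show "a + b \<noteq> 0" "b \<noteq> 0" "a * (b * 2) + b * (b * 2) \<noteq> 0" using a b by linarith+
          qed
          then show ?thesis by (simp add: field_simps power2_eq_square)
        qed
        finally have Y: "real T * eta / (2 * (1 - eta)) = a * b / 2" .
        have "a * (a + b) / 2 = a^2 / 2 + a * b / 2" by (simp add: power2_eq_square algebra_simps)
        then have "ln (real N) / eta = ln (real N) + a * b / 2" using X a2 by linarith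
        then show ?thesis using Y by linarith
      qed
      moreover have "(\<Sum>t<T. dotN N (mw N eta l (\<lambda>i. 1 / real N) t) (l t)) - (\<Sum>t<T. dotN N u (l t))
          \<le> relent N u (\<lambda>i. 1 / real N) / eta + real T * eta / (2 * (1 - eta))"
        by (rule regret) (use loss w1 e0 u in auto)
      ultimately show ?thesis using R ab by linarith
    qed
  qed
qed

theorem theorem5p1:
  fixes N T :: nat and l :: "nat \<Rightarrow> nat \<Rightarrow> real"
  assumes loss: "\<And>t i. t < T \<Longrightarrow> i < N \<Longrightarrow> 0 \<le> l t i \<and> l t i \<le> 1"
  shows
   "(\<forall>(w1 :: nat \<Rightarrow> real) (eta :: real) u.
        w1 \<in> simplex N \<longrightarrow> (\<forall>i<N. 0 < w1 i) \<longrightarrow> 0 < eta \<longrightarrow> eta < 1 \<longrightarrow>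
        u \<in> simplex N \<longrightarrow>
        (\<Sum>t<T. dotN N (mw N eta l w1 t) (l t)) - (\<Sum>t<T. dotN N u (l t))
          \<le> relent N u w1 / eta + real T * eta / (2 * (1 - eta)))
    \<and> (let w1 = (\<lambda>i. 1 / real N);
           eta = sqrt (2 * ln (real N)) / (sqrt (2 * ln (real N)) + sqrt (real T))
       in (\<forall>u \<in> simplex N.
             (\<Sum>t<T. dotN N (mw N eta l w1 t) (l t)) - (\<Sum>t<T. dotN N u (l t))
               \<le> sqrt (2 * real T * ln (real N)) + ln (real N))
        \<and> (\<forall>j<N. (\<forall>k<N. (\<Sum>t<T. l t j) \<le> (\<Sum>t<T. l t k)) \<longrightarrow>
             (\<Sum>t<T. dotN N (mw N eta l w1 t) (l t))
               - (\<Sum>t<T. dotN N (\<lambda>i. if i = j then 1 else 0) (l t))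
               \<le> sqrt (2 * real T * ln (real N)) + ln (real N)))"
proof -
  have ej: "(\<lambda>i. if i = j then 1 else 0) \<in> simplex N" if "j < N" for j :: nat
    unfolding simplex_def using that by auto
  show ?thesis
    unfolding Let_def
  proof (intro conjI allI impI ballI)
    fix w1 :: "nat \<Rightarrow> real" and eta :: real and u assume "w1 \<in> simplex N" "\<forall>i<N. 0 < w1 i" "0 < eta" "eta < 1" "u \<in> simplex N"
    then show "(\<Sum>t<T. dotN N (mw N eta l w1 t) (l t)) - (\<Sum>t<T. dotN N u (l t))
          \<le> relent N u w1 / eta + real T * eta / (2 * (1 - eta))"
      using regret[of T N l, OF loss] by blast
  next
    fix u assume "u \<in> simplex N"
    note part2[of T N l, OF loss this refl]
    then show "(\<Sum>t<T. dotN N (mw N (sqrt (2 * ln (real N)) / (sqrt (2 * ln (real N)) + sqrt (real T))) l (\<lambda>i. 1 / real N) t) (l t)) - (\<Sum>t<T. dotN N u (l t))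
               \<le> sqrt (2 * real T * ln (real N)) + ln (real N)"
      by blast
  next
    fix j assume "j < N"
    note part2[of T N l, OF loss ej[OF this] refl]
    then show "(\<Sum>t<T. dotN N (mw N (sqrt (2 * ln (real N)) / (sqrt (2 * ln (real N)) + sqrt (real T))) l (\<lambda>i. 1 / real N) t) (l t))
               - (\<Sum>t<T. dotN N (\<lambda>i. if i = j then 1 else 0) (l t))
               \<le> sqrt (2 * real T * ln (real N)) + ln (real N)"
      by blast
  qed
qed

end
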